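(* Let $T$ be a local, translation-invariant stochastic matrix on $\mathbb{Z}\times\{1,\dots,D\}$ such that $T_{j,b;j,b}>1/2$ for all $j$ and $b$. Then all eigenvalues of the Bloch matrix $X(k)$ lie in the open right half of the complex plane for every $k$ (so $\det X(k)\ne0$), and $w(T,0)=0$.
   Context: States are pairs $(j,a)$, $j\in\mathbb{Z}$, $a\in\{1,\dots,D\}$. A stochastic matrix is a real matrix $T=(T_{i,a;j,b})$ with $T_{i,a;j,b}\ge0$ and $\sum_{i,a}T_{i,a;j,b}=1$ for all $(j,b)$. It is local if there are $C,\ell>0$ with $T_{i,a;j,b}\le Ce^{-|i-j|/\ell}$ for all sufficiently large $|i-j|$, and translation invariant if $T_{i+1,a;j+1,b}=T_{i,a;j,b}$. The Bloch matrix is the $D\times D$ matrix $X(k)$ with $X_{a,b}(k)=\sum_{l\in\mathbb{Z}}T_{j+l,a;j,b}e^{-ikl}$, $k\in[-\pi,\pi]$, and $w(T,0)=\int_{-\pi}^{\pi}\frac{dk}{2\pi i}\partial_k\log\det X(k)\in\mathbb{Z}$ when $\det X(k)\neq0$ for all $k$. *)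

theory Defs
  imports "HOL-Analysis.Analysis" "Jordan_Normal_Form.Char_Poly"
begin

text \<open>States (j,a) with j an integer and a in {1..D}. A matrix on this state
space is a function T :: int => nat => int => nat => real, T i a j b being the
entry T_{i,a;j,b}; only entries with a,b in {1..D} are meaningful.\<close>

definition stochastic :: "nat \<Rightarrow> (int \<Rightarrow> nat \<Rightarrow> int \<Rightarrow> nat \<Rightarrow> real) \<Rightarrow> bool" where
  "stochastic D T \<longleftrightarrow>
     (\<forall>i j a b. a \<in> {1..D} \<longrightarrow> b \<in> {1..D} \<longrightarrow> T i a j b \<ge> 0) \<and>
     (\<forall>j b. b \<in> {1..D} \<longrightarrow> ((\<lambda>(i,a). T i a j b) has_sum 1) (UNIV \<times> {1..D}))"

definition local_matrix :: "nat \<Rightarrow> (int \<Rightarrow> nat \<Rightarrow> int \<Rightarrow> nat \<Rightarrow> real) \<Rightarrow> bool" where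
  "local_matrix D T \<longleftrightarrow>
     (\<exists>C L N. C > 0 \<and> L > 0 \<and>
        (\<forall>i j a b. a \<in> {1..D} \<longrightarrow> b \<in> {1..D} \<longrightarrow> \<bar>i - j\<bar> \<ge> N \<longrightarrow>
           T i a j b \<le> C * exp (- real_of_int \<bar>i - j\<bar> / L)))"

definition translation_invariant :: "nat \<Rightarrow> (int \<Rightarrow> nat \<Rightarrow> int \<Rightarrow> nat \<Rightarrow> real) \<Rightarrow> bool" where
  "translation_invariant D T \<longleftrightarrow>
     (\<forall>i j a b. a \<in> {1..D} \<longrightarrow> b \<in> {1..D} \<longrightarrow> T (i+1) a (j+1) b = T i a j b)"

text \<open>Bloch matrix X(k), a D x D complex matrix (Jordan_Normal_Form type mat);
row/column index a-1, b-1 (0-based) corresponds to a, b in {1..D}.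
By translation invariance the sum does not depend on j; we take j = 0.\<close>

definition bloch :: "nat \<Rightarrow> (int \<Rightarrow> nat \<Rightarrow> int \<Rightarrow> nat \<Rightarrow> real) \<Rightarrow> real \<Rightarrow> complex mat" where
  "bloch D T k = Matrix.mat D D (\<lambda>(a,b).
      infsum (\<lambda>l::int. complex_of_real (T (0 + l) (a+1) 0 (b+1)) * exp (- \<i> * complex_of_real (k * real_of_int l))) UNIV)"

text \<open>w(T,0) = \<integral>_{-pi}^{pi} dk/(2 pi i) d/dk log det X(k)
          = (1/(2 pi i)) \<integral>_{-pi}^{pi} (d/dk det X(k)) / det X(k) dk.\<close>

definition winding :: "nat \<Rightarrow> (int \<Rightarrow> nat \<Rightarrow> int \<Rightarrow> nat \<Rightarrow> real) \<Rightarrow> complex" where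
  "winding D T = integral {-pi..pi}
      (\<lambda>k. vector_derivative (\<lambda>t. Determinant.det (bloch D T t)) (at k) / Determinant.det (bloch D T k))
      / (2 * of_real pi * \<i>)"

end

theory Submission
  imports Defs "HOL-Complex_Analysis.Complex_Analysis"
begin

lemma diag_dom_det:
  fixes M :: "complex mat"
  assumes M: "M \<in> carrier_mat n n"
  and dom: "\<And>b. b < n \<Longrightarrow> (\<Sum>a\<in>{0..<n}-{b}. cmod (M $$ (a,b))) < cmod (M $$ (b,b))"
  shows "det M \<noteq> 0"
proof
  assume "det M = 0"
  hence "det (transpose_mat M) = 0" using det_transpose[OF M] by simp
  moreover have Mt: "transpose_mat M \<in> carrier_mat n n" using M by simp
  ultimately obtain w where w: "w \<in> carrier_vec n" "w \<noteq> 0\<^sub>v n" "transpose_mat M *\<^sub>v w = 0\<^sub>v n"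
    using det_0_iff_vec_prod_zero[OF Mt] by auto
  have "\<exists>b<n. w $ b \<noteq> 0"
  proof (rule ccontr)
    assume "\<not> (\<exists>b<n. w $ b \<noteq> 0)"
    hence "w = 0\<^sub>v n" using w(1) by (intro eq_vecI) auto
    thus False using w(2) by simp
  qed
  then obtain b0 where b0: "b0 < n" "w $ b0 \<noteq> 0" by auto
  define S where "S = (\<lambda>a. cmod (w$a)) ` {0..<n}"
  have finS: "finite S" "S \<noteq> {}" unfolding S_def using b0 by auto
  obtain b where b: "b < n" "Max S = cmod (w $ b)" using Max_in[OF finS] unfolding S_def by auto
  have bmax: "cmod (w$a) \<le> cmod (w$b)" if "a < n" for a
    using Max_ge[OF finS(1), of "cmod (w$a)"] that b unfolding S_def by auto
  have wb: "cmod (w$b) > 0" using bmax[OF b0(1)] b0(2) by (smt (verit) norm_le_zero_iff)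
  have "(transpose_mat M *\<^sub>v w) $ b = 0" using w(3) b(1) by simp
  hence row: "(\<Sum>a\<in>{0..<n}. M$$(a,b) * w$a) = 0"
    using M w(1) b(1) by (simp add: scalar_prod_def)
  have split: "(\<Sum>a\<in>{0..<n}. M$$(a,b) * w$a) = M$$(b,b) * w$b + (\<Sum>a\<in>{0..<n}-{b}. M$$(a,b) * w$a)"
    using b(1) by (subst sum.remove[of _ b]) auto
  have "cmod (M$$(b,b)) * cmod (w$b) = cmod (\<Sum>a\<in>{0..<n}-{b}. M$$(a,b) * w$a)"
  proof -
    have "M$$(b,b) * w$b = - (\<Sum>a\<in>{0..<n}-{b}. M$$(a,b) * w$a)"
      using row split by (simp add: eq_neg_iff_add_eq_0)
    hence "cmod (M$$(b,b) * w$b) = cmod (\<Sum>a\<in>{0..<n}-{b}. M$$(a,b) * w$a)"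
      by (metis norm_minus_cancel)
    thus ?thesis by (simp add: norm_mult)
  qed
  also have "\<dots> \<le> (\<Sum>a\<in>{0..<n}-{b}. cmod (M$$(a,b)) * cmod (w$a))"
    by (rule order_trans[OF norm_sum]) (simp add: norm_mult)
  also have "\<dots> \<le> (\<Sum>a\<in>{0..<n}-{b}. cmod (M$$(a,b)) * cmod (w$b))"
    by (rule sum_mono) (auto intro: mult_left_mono bmax)
  also have "\<dots> = (\<Sum>a\<in>{0..<n}-{b}. cmod (M$$(a,b))) * cmod (w$b)"
    by (simp add: sum_distrib_right)
  also have "\<dots> < cmod (M$$(b,b)) * cmod (w$b)"
    using dom[OF b(1)] wb by simp
  finally show False by simp
qed

lemma eig_re_pos:
  fixes M :: "complex mat"
  assumes M: "M \<in> carrier_mat n n"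
  and dom: "\<And>b. b < n \<Longrightarrow> (\<Sum>a\<in>{0..<n}-{b}. cmod (M $$ (a,b))) < Re (M $$ (b,b))"
  and ev: "eigenvalue M e"
  shows "Re e > 0"
proof (rule ccontr)
  assume neg: "\<not> Re e > 0"
  have C: "char_matrix M e \<in> carrier_mat n n" using M by simp
  have ent: "char_matrix M e $$ (a,b) = M $$ (a,b) - (if a = b then e else 0)" if "a < n" "b < n" for a b
    using M that by (auto simp: char_matrix_def)
  have "det (char_matrix M e) \<noteq> 0"
  proof (rule diag_dom_det[OF C])
    fix b assume b: "b < n"
    have "(\<Sum>a\<in>{0..<n}-{b}. cmod (char_matrix M e $$ (a,b))) = (\<Sum>a\<in>{0..<n}-{b}. cmod (M $$ (a,b)))"
      using b by (intro sum.cong) (auto simp: ent)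
    also have "\<dots> < Re (M $$ (b,b))" by (rule dom[OF b])
    also have "\<dots> \<le> Re (M $$ (b,b) - e)" using neg by simp
    also have "\<dots> \<le> cmod (M $$ (b,b) - e)" by (rule complex_Re_le_cmod)
    also have "\<dots> = cmod (char_matrix M e $$ (b,b))" using b by (simp add: ent)
    finally show "(\<Sum>a\<in>{0..<n}-{b}. cmod (char_matrix M e $$ (a,b))) < cmod (char_matrix M e $$ (b,b))" .
  qed
  thus False using ev eigenvalue_det[OF M] by simp
qed

definition tm :: "(int \<Rightarrow> real) \<Rightarrow> complex \<Rightarrow> int \<Rightarrow> complex" where
  "tm c z l = complex_of_real (c l) * exp (- \<i> * z * of_int l)"

definition FF :: "(int \<Rightarrow> real) \<Rightarrow> complex \<Rightarrow> complex" where
  "FF c z = infsum (tm c z) UNIV"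

definition uu :: "(int \<Rightarrow> real) \<Rightarrow> nat \<Rightarrow> complex \<Rightarrow> complex" where
  "uu c n z = tm c z (int n) + tm c z (- int n - 1)"

definition MM :: "(int \<Rightarrow> real) \<Rightarrow> real \<Rightarrow> nat \<Rightarrow> real" where
  "MM c L n = c (int n) * exp (real n / (2*L)) + c (- int n - 1) * exp ((real n + 1) / (2*L))"

lemma norm_tm: assumes "c l \<ge> 0" shows "norm (tm c z l) = c l * exp (Im z * of_int l)"
  using assms by (simp add: tm_def norm_mult norm_exp_eq_Re)

lemma norm_tm_le: assumes "c l \<ge> 0" "\<bar>Im z\<bar> \<le> d"
  shows "norm (tm c z l) \<le> c l * exp (d * \<bar>of_int l\<bar>)"
proof -
  have "Im z * of_int l \<le> \<bar>Im z\<bar> * \<bar>of_int l\<bar>"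
    by (metis abs_ge_self abs_mult)
  also have "\<dots> \<le> d * \<bar>of_int l\<bar>" using assms(2) by (simp add: mult_right_mono)
  finally have "exp (Im z * of_int l) \<le> exp (d * \<bar>of_int l\<bar>)" by simp
  thus ?thesis using norm_tm[of c l z, OF assms(1)] assms(1) by (simp add: mult_left_mono)
qed

lemma summable_MM:
  assumes nn: "\<And>l. c l \<ge> 0" and L: "L > 0"
    and dec: "\<And>l. \<bar>l\<bar> \<ge> N \<Longrightarrow> c l \<le> C * exp (- real_of_int \<bar>l\<bar> / L)"
  shows "summable (MM c L)"
proof -
  define q where "q = exp (- 1 / (2*L))"
  have q0: "q > 0" unfolding q_def by simp
  have q1: "q < 1" unfolding q_def using L by simp
  have qn: "q ^ n = exp (real n * (- 1 / (2*L)))" for n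
    unfolding q_def by (rule exp_of_nat_mult[symmetric])
  have C0: "C \<ge> 0"
  proof -
    have "c (\<bar>N\<bar> + 1) \<le> C * exp (- real_of_int \<bar>\<bar>N\<bar> + 1\<bar> / L)" by (rule dec) simp
    moreover have "c (\<bar>N\<bar> + 1) \<ge> 0" by (rule nn)
    ultimately have "0 \<le> C * exp (- real_of_int \<bar>\<bar>N\<bar> + 1\<bar> / L)" by linarith
    thus ?thesis by (simp add: zero_le_mult_iff)
  qed
  have "summable (\<lambda>n. (2*C) * q^n)"
    by (rule summable_mult[OF summable_geometric]) (use q0 q1 in simp)
  moreover have "norm (MM c L n) \<le> 2*C*q^n" if "nat N \<le> n" for n
  proof -
    have n1: "\<bar>int n\<bar> \<ge> N" using that by linarith
    have n2: "\<bar>- int n - 1\<bar> \<ge> N" using that by linarith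
    have e1: "c (int n) * exp (real n / (2*L)) \<le> C * q^n"
    proof -
      have "c (int n) * exp (real n / (2*L)) \<le> C * exp (- real n / L) * exp (real n / (2*L))"
        using dec[OF n1] by (intro mult_right_mono) auto
      also have "\<dots> = C * exp (- real n / L + real n / (2*L))" by (simp only: exp_add mult.assoc)
      also have "- real n / L + real n / (2*L) = real n * (- 1 / (2*L))" using L by (simp add: field_simps)
      finally show ?thesis by (simp add: qn)
    qed
    have e2: "c (- int n - 1) * exp ((real n + 1) / (2*L)) \<le> C * q^n"
    proof -
      have eq: "- real_of_int \<bar>- int n - 1\<bar> / L = - (real n + 1) / L" by simp
      have "c (- int n - 1) \<le> C * exp (- (real n + 1) / L)" using dec[OF n2, unfolded eq] .
      hence "c (- int n - 1) * exp ((real n + 1) / (2*L)) \<le> C * exp (- (real n + 1) / L) * exp ((real n + 1) / (2*L))"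
        by (intro mult_right_mono) auto
      also have "\<dots> = C * exp (- (real n + 1) / L + (real n + 1) / (2*L))" by (simp add: exp_add)
      also have "- (real n + 1) / L + (real n + 1) / (2*L) = real (Suc n) * (- 1 / (2*L))" using L by (simp add: field_simps)
      also have "C * exp (real (Suc n) * (- 1 / (2*L))) = C * q^(Suc n)" by (simp only: qn)
      also have "\<dots> \<le> C * q^n" using q0 q1 C0 by (intro mult_left_mono) (auto intro: power_decreasing)
      finally show ?thesis .
    qed
    have "MM c L n \<ge> 0" unfolding MM_def using nn by (intro add_nonneg_nonneg mult_nonneg_nonneg) auto
    hence "norm (MM c L n) = MM c L n" by simp
    also have "\<dots> \<le> 2*C*q^n" unfolding MM_def using e1 e2 by simp
    finally show ?thesis .
  qed
  ultimately show ?thesis by (rule summable_comparison_test')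
qed

lemma uu_le_MM:
  assumes nn: "\<And>l. c l \<ge> 0" and z: "\<bar>Im z\<bar> \<le> 1/(2*L)"
  shows "norm (tm c z (int n)) \<le> c (int n) * exp (real n / (2*L))"
    and "norm (tm c z (- int n - 1)) \<le> c (- int n - 1) * exp ((real n + 1) / (2*L))"
    and "norm (uu c n z) \<le> MM c L n"
proof -
  show a: "norm (tm c z (int n)) \<le> c (int n) * exp (real n / (2*L))"
    using norm_tm_le[of c "int n" z "1/(2*L)", OF nn z] by simp
  have "\<bar>real_of_int (- int n - 1)\<bar> = real n + 1" by simp
  thus b: "norm (tm c z (- int n - 1)) \<le> c (- int n - 1) * exp ((real n + 1) / (2*L))"
    using norm_tm_le[of c "- int n - 1" z "1/(2*L)", OF nn z] by (simp add: add.commute)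
  show "norm (uu c n z) \<le> MM c L n"
    unfolding uu_def MM_def using a b norm_triangle_ineq[of "tm c z (int n)" "tm c z (- int n - 1)"] by simp
qed

lemma tm_has_sum:
  assumes nn: "\<And>l. c l \<ge> 0" and L: "L > 0"
    and dec: "\<And>l. \<bar>l\<bar> \<ge> N \<Longrightarrow> c l \<le> C * exp (- real_of_int \<bar>l\<bar> / L)"
    and z: "\<bar>Im z\<bar> \<le> 1/(2*L)"
  shows "(tm c z has_sum (\<Sum>n. uu c n z)) UNIV"
proof -
  have sM: "summable (MM c L)" by (rule summable_MM[OF nn L dec])
  define A where "A = (\<lambda>n. tm c z (int n))"
  define B where "B = (\<lambda>n. tm c z (- int n - 1))"
  have MA: "norm (norm (A n)) \<le> MM c L n" for n
  proof -
    have "norm (A n) \<le> c (int n) * exp (real n / (2*L))" unfolding A_def by (rule uu_le_MM(1)[OF nn z])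
    also have "\<dots> \<le> MM c L n" unfolding MM_def using nn[of "- int n - 1"] by simp
    finally show ?thesis by simp
  qed
  have MB: "norm (norm (B n)) \<le> MM c L n" for n
  proof -
    have "norm (B n) \<le> c (- int n - 1) * exp ((real n + 1) / (2*L))" unfolding B_def by (rule uu_le_MM(2)[OF nn z])
    also have "\<dots> \<le> MM c L n" unfolding MM_def using nn[of "int n"] by simp
    finally show ?thesis by simp
  qed
  have sA: "summable (\<lambda>n. norm (A n))" by (rule summable_comparison_test'[OF sM MA])
  have sB: "summable (\<lambda>n. norm (B n))" by (rule summable_comparison_test'[OF sM MB])
  have hA: "(A has_sum suminf A) UNIV"
    by (rule norm_summable_imp_has_sum[OF sA summable_sums[OF summable_norm_cancel[OF sA]]])
  have hB: "(B has_sum suminf B) UNIV"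
    by (rule norm_summable_imp_has_sum[OF sB summable_sums[OF summable_norm_cancel[OF sB]]])
  have h1: "(tm c z has_sum suminf A) (range int)"
    using hA by (subst has_sum_reindex) (auto simp: inj_on_def A_def o_def)
  have injB: "inj (\<lambda>n::nat. - int n - 1)" by (auto simp: inj_on_def)
  have h2: "(tm c z has_sum suminf B) (range (\<lambda>n::nat. - int n - 1))"
    using hB by (subst has_sum_reindex[OF injB]) (auto simp: B_def o_def)
  have un0: "l \<in> range int \<union> range (\<lambda>n::nat. - int n - 1)" for l :: int
    proof (cases "l \<ge> 0")
      case True thus ?thesis by (auto intro!: image_eqI[of l int "nat l"])
    next
      case False thus ?thesis by (auto intro!: image_eqI[of l _ "nat (- l - 1)"])
    qed
  have un: "range int \<union> range (\<lambda>n::nat. - int n - 1) = UNIV" using un0 by blast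
  have dj: "range int \<inter> range (\<lambda>n::nat. - int n - 1) = {}" by auto
  have "(tm c z has_sum suminf A + suminf B) UNIV"
    using has_sum_Un_disjoint[OF h1 h2 dj] un by simp
  moreover have "suminf A + suminf B = (\<Sum>n. uu c n z)"
    using suminf_add[OF summable_norm_cancel[OF sA] summable_norm_cancel[OF sB]]
    by (simp add: uu_def A_def B_def)
  ultimately show ?thesis by simp
qed

lemma FF_eq:
  assumes nn: "\<And>l. c l \<ge> 0" and L: "L > 0"
    and dec: "\<And>l. \<bar>l\<bar> \<ge> N \<Longrightarrow> c l \<le> C * exp (- real_of_int \<bar>l\<bar> / L)"
    and z: "\<bar>Im z\<bar> \<le> 1/(2*L)"
  shows "FF c z = (\<Sum>n. uu c n z)"
  unfolding FF_def using tm_has_sum[OF nn L dec z] by (rule infsumI)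

lemma FF_holo:
  assumes nn: "\<And>l. c l \<ge> 0" and L: "L > 0"
    and dec: "\<And>l. \<bar>l\<bar> \<ge> N \<Longrightarrow> c l \<le> C * exp (- real_of_int \<bar>l\<bar> / L)"
  shows "FF c holomorphic_on {z. \<bar>Im z\<bar> < 1/(2*L)}"
proof -
  define S where "S = {z. \<bar>Im z\<bar> < 1/(2*L)}"
  define A where "A = {z. \<bar>Im z\<bar> \<le> 1/(2*L)}"
  define G where "G z = (\<Sum>n. uu c n z)" for z
  have ul: "uniform_limit A (\<lambda>n z. \<Sum>i<n. uu c i z) G sequentially"
    unfolding G_def
    by (rule Weierstrass_m_test[OF _ summable_MM[OF nn L dec]]) (auto simp: A_def intro: uu_le_MM(3)[OF nn])
  have ent: "(\<lambda>z. \<Sum>i<n. uu c i z) holomorphic_on UNIV" for n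
    unfolding uu_def tm_def by (intro holomorphic_intros)
  have "G field_differentiable at z0" if z0: "z0 \<in> S" for z0
  proof -
    define r where "r = 1/(2*L) - \<bar>Im z0\<bar>"
    have r: "r > 0" using z0 unfolding r_def S_def by simp
    have sub: "cball z0 r \<subseteq> A"
    proof
      fix w assume "w \<in> cball z0 r"
      hence "cmod (z0 - w) \<le> r" by (simp add: dist_norm)
      moreover have "\<bar>Im z0 - Im w\<bar> \<le> cmod (z0 - w)" using abs_Im_le_cmod[of "z0 - w"] by simp
      ultimately have "\<bar>Im w\<bar> \<le> 1/(2*L)" unfolding r_def by (smt (verit))
      thus "w \<in> A" unfolding A_def by simp
    qed
    obtain "continuous_on (cball z0 r) G" "G holomorphic_on ball z0 r"
    proof (rule holomorphic_uniform_limit[OF _ uniform_limit_on_subset[OF ul sub]])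
      show "\<forall>\<^sub>F n in sequentially. continuous_on (cball z0 r) (\<lambda>z. \<Sum>i<n. uu c i z) \<and>
          (\<lambda>z. \<Sum>i<n. uu c i z) holomorphic_on ball z0 r"
        using ent by (auto intro!: always_eventually holomorphic_on_imp_continuous_on intro: holomorphic_on_subset)
    qed auto
    thus ?thesis using r by (intro holomorphic_on_imp_differentiable_at[of G "ball z0 r"]) auto
  qed
  hence "G holomorphic_on S" unfolding holomorphic_on_def by (auto intro: field_differentiable_at_within)
  moreover have "G z = FF c z" if "z \<in> S" for z
    using FF_eq[of c L N C z, OF nn L dec] that unfolding G_def S_def by simp
  ultimately show ?thesis unfolding S_def by (rule holomorphic_transform)
qed
lemma FF_real_bounds:
  assumes nn: "\<And>l. c l \<ge> 0" and hs: "(c has_sum s) UNIV"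
  shows "norm (FF c (complex_of_real k)) \<le> s"
    and "Re (FF c (complex_of_real k)) \<ge> 2 * c 0 - s"
proof -
  let ?t = "tm c (complex_of_real k)"
  have nt: "norm (?t l) = c l" for l using norm_tm[of c l "complex_of_real k", OF nn] by simp
  have nfun: "(\<lambda>l. norm (?t l)) = c" using nt by auto
  have csum: "c summable_on UNIV" using hs unfolding summable_on_def by blast
  have abs: "(\<lambda>l. norm (?t l)) summable_on A" for A
    unfolding nfun by (rule summable_on_subset_banach[OF csum]) simp
  have s: "infsum c UNIV = s" using hs by (rule infsumI)
  show "norm (FF c (complex_of_real k)) \<le> s"
    unfolding FF_def using norm_infsum_bound[OF abs[of UNIV]] unfolding nfun s .
  have U: "UNIV = insert (0::int) (UNIV - {0})" by auto
  have cs0: "c summable_on (UNIV - {0})" by (rule summable_on_subset_banach[OF csum]) simp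
  have "s = c 0 + infsum c (UNIV - {0})"
    using infsum_insert[OF cs0, of 0] U s by simp
  have ts0: "?t summable_on (UNIV - {0})" by (rule abs_summable_summable[OF abs])
  have "FF c (complex_of_real k) = ?t 0 + infsum ?t (UNIV - {0})"
    unfolding FF_def using infsum_insert[OF ts0, of 0] U by simp
  moreover have "?t 0 = complex_of_real (c 0)" by (simp add: tm_def)
  moreover have "norm (infsum ?t (UNIV - {0})) \<le> infsum c (UNIV - {0})"
    using norm_infsum_bound[OF abs[of "UNIV - {0}"]] unfolding nfun .
  moreover have "s = c 0 + infsum c (UNIV - {0})"
    using infsum_insert[OF cs0, of 0] U s by simp
  moreover have "- norm (infsum ?t (UNIV - {0})) \<le> Re (infsum ?t (UNIV - {0}))"
    using abs_Re_le_cmod[of "infsum ?t (UNIV - {0})"] by linarith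
  ultimately show "Re (FF c (complex_of_real k)) \<ge> 2 * c 0 - s" by simp
qed

lemma FF_periodic: "FF c (- complex_of_real pi) = FF c (complex_of_real pi)"
proof -
  have "tm c (- complex_of_real pi) l = tm c (complex_of_real pi) l" for l
  proof -
    have "exp (- \<i> * (- complex_of_real pi) * of_int l) = exp (- \<i> * complex_of_real pi * of_int l)"
      by (subst exp_eq) (rule exI[of _ l], simp add: algebra_simps)
    thus ?thesis by (simp add: tm_def)
  qed
  hence "tm c (- complex_of_real pi) = tm c (complex_of_real pi)" by (rule ext)
  thus ?thesis unfolding FF_def by simp
qed

lemma det_mat_expand:
  "det (Matrix.mat n n (\<lambda>(a,b). f a b)) =
     (\<Sum>p\<in>{p. p permutes {0..<n}}. signof p * (\<Prod>i=0..<n. f i (p i)))"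
proof -
  have "det (Matrix.mat n n (\<lambda>(a,b). f a b)) =
     (\<Sum>p\<in>{p. p permutes {0..<n}}. signof p * (\<Prod>i=0..<n. Matrix.mat n n (\<lambda>(a,b). f a b) $$ (i, p i)))"
    by (rule det_def') simp
  also have "\<dots> = (\<Sum>p\<in>{p. p permutes {0..<n}}. signof p * (\<Prod>i=0..<n. f i (p i)))"
  proof (intro sum.cong refl arg_cong2[where f="(*)"] prod.cong)
    fix p i assume "p \<in> {p. p permutes {0..<n}}" "i \<in> {0..<n}"
    hence "p i < n" using permutes_in_image[of p "{0..<n}" i] by auto
    thus "Matrix.mat n n (\<lambda>(a,b). f a b) $$ (i, p i) = f i (p i)" using \<open>i \<in> {0..<n}\<close> by simp
  qed
  finally show ?thesis .
qed

lemma det_cont: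
  assumes "\<And>a b. a < n \<Longrightarrow> b < n \<Longrightarrow> continuous_on S (\<lambda>x. f a b x)"
  shows "continuous_on S (\<lambda>x. det (Matrix.mat n n (\<lambda>(a,b). f a b x)) :: complex)"
  unfolding det_mat_expand
proof (intro continuous_on_sum continuous_on_mult continuous_on_const continuous_on_prod)
  fix p i assume "p \<in> {p. p permutes {0..<n}}" "i \<in> {0..<n}"
  hence "i < n" "p i < n" using permutes_in_image[of p "{0..<n}" i] by auto
  thus "continuous_on S (\<lambda>x. f i (p i) x)" by (rule assms)
qed

lemma det_holo:
  assumes "\<And>a b. a < n \<Longrightarrow> b < n \<Longrightarrow> (\<lambda>x. f a b x) holomorphic_on S"
  shows "(\<lambda>x. det (Matrix.mat n n (\<lambda>(a,b). f a b x))) holomorphic_on S"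
  unfolding det_mat_expand
proof (intro holomorphic_on_sum holomorphic_on_mult holomorphic_on_const holomorphic_on_prod)
  fix p i assume "p \<in> {p. p permutes {0..<n}}" "i \<in> {0..<n}"
  hence "i < n" "p i < n" using permutes_in_image[of p "{0..<n}" i] by auto
  thus "(\<lambda>x. f i (p i) x) holomorphic_on S" by (rule assms)
qed

lemma col_sums:
  fixes f :: "int \<Rightarrow> nat \<Rightarrow> real"
  assumes hs: "((\<lambda>(i,a). f i a) has_sum 1) (UNIV \<times> A)" and fin: "finite A"
  shows "\<And>a. a \<in> A \<Longrightarrow> ((\<lambda>i. f i a) has_sum infsum (\<lambda>i. f i a) UNIV) UNIV"
    and "(\<Sum>a\<in>A. infsum (\<lambda>i. f i a) UNIV) = 1"
proof -
  let ?g = "(\<lambda>(i,a). f i a)"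
  have gs: "?g summable_on (UNIV \<times> A)" using hs unfolding summable_on_def by blast
  have sl: "((\<lambda>i. f i a) has_sum infsum (\<lambda>i. f i a) UNIV) UNIV" if a: "a \<in> A" for a
  proof -
    have "?g summable_on ((\<lambda>i. (i,a)) ` UNIV)"
      by (rule summable_on_subset_banach[OF gs]) (use a in auto)
    then obtain x where "(?g has_sum x) ((\<lambda>i. (i,a)) ` UNIV)" unfolding summable_on_def by blast
    hence "((?g \<circ> (\<lambda>i. (i,a))) has_sum x) UNIV" by (subst has_sum_reindex[symmetric]) (auto simp: inj_on_def)
    hence "((\<lambda>i. f i a) has_sum x) UNIV" by (simp add: o_def)
    thus ?thesis using infsumI by (metis)
  qed
  thus "\<And>a. a \<in> A \<Longrightarrow> ((\<lambda>i. f i a) has_sum infsum (\<lambda>i. f i a) UNIV) UNIV" .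
  have "(?g has_sum 1) (prod.swap ` (A \<times> UNIV))" using hs by (simp add: product_swap)
  hence "((?g \<circ> prod.swap) has_sum 1) (A \<times> UNIV)"
    by (subst has_sum_reindex[symmetric]) auto
  hence h2: "((\<lambda>(a,i). f i a) has_sum 1) (Sigma A (\<lambda>_. UNIV))" by (simp add: o_def case_prod_unfold)
  have "((\<lambda>a. infsum (\<lambda>i. f i a) UNIV) has_sum 1) A"
    by (rule has_sum_SigmaD[OF h2]) (use sl in simp)
  thus "(\<Sum>a\<in>A. infsum (\<lambda>i. f i a) UNIV) = 1" using has_sum_finite[OF fin] has_sum_unique by metis
qed
theorem mainTheorem6:
  fixes D :: nat and T :: "int \<Rightarrow> nat \<Rightarrow> int \<Rightarrow> nat \<Rightarrow> real"
  assumes "stochastic D T"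
    and "local_matrix D T"
    and "translation_invariant D T"
    and "\<And>j b. b \<in> {1..D} \<Longrightarrow> T j b j b > 1/2"
  shows "(\<forall>k \<in> {-pi..pi}. \<forall>ev. eigenvalue (bloch D T k) ev \<longrightarrow> Re ev > 0)
       \<and> (\<forall>k \<in> {-pi..pi}. Determinant.det (bloch D T k) \<noteq> 0)
       \<and> winding D T = 0"
proof -
  obtain C L N where L: "L > 0" and loc: "\<forall>i j a b. a \<in> {1..D} \<longrightarrow> b \<in> {1..D} \<longrightarrow> \<bar>i - j\<bar> \<ge> N \<longrightarrow>
           T i a j b \<le> C * exp (- real_of_int \<bar>i - j\<bar> / L)"
    using assms(2) unfolding local_matrix_def by blast
  define c where "c a b = (\<lambda>l. T l (Suc a) 0 (Suc b))" for a b
  have nn: "c a b l \<ge> 0" if "a < D" "b < D" for a b l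
    using assms(1) that unfolding stochastic_def c_def by auto
  have dec: "c a b l \<le> C * exp (- real_of_int \<bar>l\<bar> / L)" if "a < D" "b < D" "\<bar>l\<bar> \<ge> N" for a b l
    using loc[rule_format, of "Suc a" "Suc b" l 0] that unfolding c_def by auto
  define s where "s a b = infsum (c a b) UNIV" for a b
  have hs: "(c a b has_sum s a b) UNIV" and s1: "(\<Sum>a\<in>{0..<D}. s a b) = 1" if "a < D" "b < D" for a b
  proof -
    have h: "((\<lambda>(i,a). T i a 0 (Suc b)) has_sum 1) (UNIV \<times> {1..D})"
      using assms(1) that unfolding stochastic_def by auto
    note cs = col_sums[of "\<lambda>i a. T i a 0 (Suc b)", OF h]
    show "(c a b has_sum s a b) UNIV" using cs(1)[of "Suc a"] that unfolding c_def s_def by auto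
    have "(\<Sum>a\<in>{0..<D}. s a b) = (\<Sum>a\<in>{0..<D}. infsum (\<lambda>i. T i (Suc a) 0 (Suc b)) UNIV)"
      unfolding s_def c_def by simp
    also have "\<dots> = (\<Sum>a\<in>{Suc 0..<Suc D}. infsum (\<lambda>i. T i a 0 (Suc b)) UNIV)"
      by (rule sum.shift_bounds_Suc_ivl[symmetric])
    also have "{Suc 0..<Suc D} = {1..D}" by auto
    finally show "(\<Sum>a\<in>{0..<D}. s a b) = 1" using cs(2) by simp
  qed
  have diag: "c b b 0 > 1/2" if "b < D" for b using assms(4)[of "Suc b" 0] that unfolding c_def by auto
  define E where "E a b z = FF (c a b) z" for a b z
  define S where "S = {z. \<bar>Im z\<bar> < 1/(2*L)}"
  have openS: "open S" unfolding S_def by (intro open_Collect_less continuous_intros)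
  have realS: "complex_of_real k \<in> S" for k using L by (simp add: S_def)
  have Eholo: "E a b holomorphic_on S" if "a < D" "b < D" for a b
    unfolding E_def[abs_def] S_def
    by (rule FF_holo[of "c a b" L N C]) (use nn dec that L in auto)
  have Econt: "continuous_on S (E a b)" if "a < D" "b < D" for a b
    using Eholo[OF that] by (rule holomorphic_on_imp_continuous_on)
  have Eper: "E a b (- complex_of_real pi) = E a b (complex_of_real pi)" for a b
    unfolding E_def by (rule FF_periodic)
  have bloch_eq: "bloch D T k = Matrix.mat D D (\<lambda>(a,b). E a b (complex_of_real k))" for k
    unfolding bloch_def E_def FF_def tm_def c_def by (simp add: mult.assoc)
  have dom: "(\<Sum>a\<in>{0..<D}-{b}. cmod (E a b (complex_of_real k))) + (2 * c b b 0 - 1) \<le> Re (E b b (complex_of_real k))"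
    if b: "b < D" for b k
  proof -
    have "(\<Sum>a\<in>{0..<D}-{b}. cmod (E a b (complex_of_real k))) \<le> (\<Sum>a\<in>{0..<D}-{b}. s a b)"
      unfolding E_def by (intro sum_mono FF_real_bounds(1)) (use nn hs b in auto)
    also have "(\<Sum>a\<in>{0..<D}-{b}. s a b) = 1 - s b b"
      using s1[OF b b] b by (subst sum_diff1) auto
    finally have "(\<Sum>a\<in>{0..<D}-{b}. cmod (E a b (complex_of_real k))) \<le> 1 - s b b" .
    moreover have "Re (E b b (complex_of_real k)) \<ge> 2 * c b b 0 - s b b"
      unfolding E_def by (rule FF_real_bounds(2)) (use nn hs b in auto)
    ultimately show ?thesis by linarith
  qed
  define Fd where "Fd z = det (Matrix.mat D D (\<lambda>(a,b). E a b z))" for z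
  have Fd_holo: "Fd holomorphic_on S" unfolding Fd_def[abs_def] by (rule det_holo) (rule Eholo)
  have detbloch: "det (bloch D T k) = Fd (complex_of_real k)" for k by (simp add: bloch_eq Fd_def)
  have bloch_carrier: "bloch D T k \<in> carrier_mat D D" for k by (simp add: bloch_def)

  have partA: "\<forall>k \<in> {-pi..pi}. \<forall>ev. eigenvalue (bloch D T k) ev \<longrightarrow> Re ev > 0"
  proof (intro ballI allI impI)
    fix k ev assume ev: "eigenvalue (bloch D T k) ev"
    show "Re ev > 0"
    proof (rule eig_re_pos[OF bloch_carrier _ ev])
      fix b assume b: "b < D"
      have "(\<Sum>a\<in>{0..<D}-{b}. cmod (bloch D T k $$ (a,b))) = (\<Sum>a\<in>{0..<D}-{b}. cmod (E a b (complex_of_real k)))"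
        by (intro sum.cong) (auto simp: bloch_eq b)
      also have "\<dots> < Re (E b b (complex_of_real k))" using dom[OF b, of k] diag[OF b] by linarith
      also have "\<dots> = Re (bloch D T k $$ (b,b))" by (simp add: bloch_eq b)
      finally show "(\<Sum>a\<in>{0..<D}-{b}. cmod (bloch D T k $$ (a,b))) < Re (bloch D T k $$ (b,b))" .
    qed
  qed

  define M where "M t z = Matrix.mat D D (\<lambda>(a,b). (1 - complex_of_real t) * E a b z + complex_of_real t * (if a = b then 1 else 0))" for t z
  have Mdet: "det (M t (complex_of_real k)) \<noteq> 0" if t: "t \<in> {0..1}" for t k
  proof (rule diag_dom_det)
    show "M t (complex_of_real k) \<in> carrier_mat D D" by (simp add: M_def)
    fix b assume b: "b < D"
    have t1: "1 - complex_of_real t = complex_of_real (1 - t)" by simp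
    have ent: "M t z $$ (a,b') = (1 - complex_of_real t) * E a b' z + complex_of_real t * (if a = b' then 1 else 0)"
      if "a < D" "b' < D" for a b' z
      unfolding M_def using that by simp
    have off: "cmod (M t z $$ (a,b)) = (1 - t) * cmod (E a b z)" if "a \<in> {0..<D}-{b}" for a z
    proof -
      have "M t z $$ (a,b) = complex_of_real (1-t) * E a b z" using that b ent[of a b z] by (simp only: t1) simp
      thus ?thesis using t by (simp only: norm_mult norm_of_real) simp
    qed
    have "(\<Sum>a\<in>{0..<D}-{b}. cmod (M t (complex_of_real k) $$ (a,b))) = (\<Sum>a\<in>{0..<D}-{b}. (1 - t) * cmod (E a b (complex_of_real k)))"
      by (rule sum.cong[OF refl off])
    also have "\<dots> = (1 - t) * (\<Sum>a\<in>{0..<D}-{b}. cmod (E a b (complex_of_real k)))" by (simp add: sum_distrib_left)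
    also have "\<dots> \<le> (1 - t) * (Re (E b b (complex_of_real k)) - (2 * c b b 0 - 1))"
      using dom[OF b, of k] t by (intro mult_left_mono) auto
    also have "\<dots> < (1 - t) * Re (E b b (complex_of_real k)) + t"
    proof (cases "t = 1")
      case True thus ?thesis by simp
    next
      case False
      hence "(1 - t) * (2 * c b b 0 - 1) > 0" using t diag[OF b] by (intro mult_pos_pos) auto
      thus ?thesis using t by (simp add: algebra_simps)
    qed
    also have "\<dots> = Re (M t (complex_of_real k) $$ (b,b))" using ent[OF b b, of "complex_of_real k"] by (simp only: t1) simp
    also have "\<dots> \<le> cmod (M t (complex_of_real k) $$ (b,b))" by (rule complex_Re_le_cmod)
    finally show "(\<Sum>a\<in>{0..<D}-{b}. cmod (M t (complex_of_real k) $$ (a,b))) < cmod (M t (complex_of_real k) $$ (b,b))" .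
  qed
  have M0: "M 0 z = Matrix.mat D D (\<lambda>(a,b). E a b z)" for z unfolding M_def by (rule cong_mat) auto
  have M1: "M 1 z = 1\<^sub>m D" for z unfolding M_def one_mat_def by (rule cong_mat) auto
  have Mper: "M t (- complex_of_real pi) = M t (complex_of_real pi)" for t unfolding M_def by (simp add: Eper)
  have partB: "\<forall>k \<in> {-pi..pi}. Determinant.det (bloch D T k) \<noteq> 0"
    using Mdet[of 0] by (simp add: M0 bloch_eq)

  define lp where "lp = linepath (- complex_of_real pi) (complex_of_real pi)"
  have lp_real: "lp x = complex_of_real ((2*x - 1) * pi)" for x
    unfolding lp_def linepath_def by (simp add: scaleR_conv_of_real algebra_simps)
  define g0 where "g0 = Fd \<circ> lp"
  define Hh where "Hh p = det (M (fst p) (lp (snd p)))" for p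
  have Hcont: "continuous_on ({0..1} \<times> {0..1}) Hh"
    unfolding Hh_def[abs_def] M_def
  proof (rule det_cont)
    fix a b assume ab: "a < D" "b < D"
    have "continuous_on ({0..1::real} \<times> {0..1::real}) (\<lambda>x. E a b (complex_of_real ((2 * snd x - 1) * pi)))"
      by (rule continuous_on_compose2[OF Econt[OF ab]]) (auto intro!: continuous_intros simp: S_def L)
    thus "continuous_on ({0..1} \<times> {0..1}) (\<lambda>x. (1 - complex_of_real (fst x)) * E a b (lp (snd x)) +
            complex_of_real (fst x) * (if a = b then 1 else 0))"
      unfolding lp_real by (intro continuous_intros)
  qed
  have hom: "homotopic_loops (- {0}) g0 (\<lambda>x. 1)"
    unfolding homotopic_loops
  proof (intro exI[of _ Hh] conjI ballI)
    show "continuous_on ({0..1} \<times> {0..1}) Hh" by (rule Hcont)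
    show "Hh \<in> {0..1} \<times> {0..1} \<rightarrow> - {0}"
    proof (rule Pi_I)
      fix p :: "real \<times> real" assume "p \<in> {0..1} \<times> {0..1}"
      hence "fst p \<in> {0..1}" by auto
      from Mdet[OF this, of "(2 * snd p - 1) * pi"]
      show "Hh p \<in> - {0}" unfolding Hh_def lp_real by simp
    qed
    show "Hh (0, x) = g0 x" for x by (simp add: Hh_def g0_def M0 Fd_def)
    show "Hh (1, x) = 1" for x by (simp add: Hh_def M1)
    show "pathfinish (Hh \<circ> Pair t) = pathstart (Hh \<circ> Pair t)" for t
      by (simp add: pathfinish_def pathstart_def Hh_def lp_def linepath_def Mper)
  qed
  have wn: "winding_number g0 0 = 0"
    using winding_number_homotopic_loops[OF hom] winding_number_zero_const[of 1 0] by simp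
  have lpS: "lp x \<in> S" for x unfolding lp_real by (rule realS)
  have valid: "valid_path g0"
    unfolding g0_def lp_def
    by (rule valid_path_compose_holomorphic[OF valid_path_linepath Fd_holo openS])
       (use lpS in \<open>auto simp: lp_def path_image_def\<close>)
  have notin: "0 \<notin> path_image g0"
  proof -
    have "g0 x \<noteq> 0" for x
      using Mdet[of 0 "(2*x-1)*pi"] unfolding g0_def o_def lp_real M0 Fd_def by simp
    thus ?thesis by (auto simp: path_image_def)
  qed
  have ci: "((\<lambda>w. 1 / (w - 0)) has_contour_integral 0) g0"
    using has_contour_integral_winding_number[OF valid notin] wn by simp
  have vd: "vector_derivative g0 (at x within {0..1}) = (2 * complex_of_real pi) * deriv Fd (lp x)"
    if x: "x \<in> {0..1}" for x
  proof -
    have "(g0 has_vector_derivative (complex_of_real pi - (- complex_of_real pi)) * deriv Fd (lp x)) (at x within {0..1})"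
      unfolding g0_def lp_def
      by (rule field_vector_diff_chain_within[OF has_vector_derivative_linepath_within])
         (rule holomorphic_derivI[OF Fd_holo openS], use lpS in \<open>simp add: lp_def\<close>)
    hence "(g0 has_vector_derivative (2 * complex_of_real pi) * deriv Fd (lp x)) (at x within cbox 0 1)"
      by (simp add: cbox_interval)
    hence "vector_derivative g0 (at x within cbox 0 1) = (2 * complex_of_real pi) * deriv Fd (lp x)"
      by (rule vector_derivative_within_cbox[rotated 2]) (use x in \<open>auto simp: cbox_interval\<close>)
    thus ?thesis by (simp add: cbox_interval)
  qed
  define g where "g k = deriv Fd (complex_of_real k) / Fd (complex_of_real k)" for k
  have i1: "((\<lambda>x. (2 * complex_of_real pi) * g ((2*x - 1) * pi)) has_integral 0) (cbox 0 1)"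
  proof -
    have hi: "((\<lambda>x. 1 / (g0 x - 0) * vector_derivative g0 (at x within {0..1})) has_integral 0) {0..1}"
      using ci unfolding has_contour_integral_def .
    have eqs: "1 / (g0 x - 0) * vector_derivative g0 (at x within {0..1}) = (2 * complex_of_real pi) * g ((2*x - 1) * pi)"
      if x: "x \<in> {0..1}" for x
      unfolding vd[OF x] by (simp add: g_def g0_def lp_real)
    show ?thesis unfolding cbox_interval
    proof (rule iffD1[OF has_integral_cong hi])
      fix x :: real assume "x \<in> {0..1}"
      thus "1 / (g0 x - 0) * vector_derivative g0 (at x within {0..1}) = (2 * complex_of_real pi) * g ((2*x - 1) * pi)"
        by (rule eqs)
    qed
  qed
  have i2: "((\<lambda>x. (2 * complex_of_real pi) * g x) has_integral 0) {-pi..pi}"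
  proof -
    have "((\<lambda>x. (2 * complex_of_real pi) * g ((2*((1/(2*pi)) *\<^sub>R x + 1/2) - 1) * pi)) has_integral
           (1 / \<bar>1/(2*pi)\<bar> ^ DIM(real)) *\<^sub>R 0)
          ((\<lambda>x. (1 / (1/(2*pi))) *\<^sub>R x + - ((1 / (1/(2*pi))) *\<^sub>R (1/2))) ` cbox 0 1)"
      by (rule has_integral_affinity[OF i1]) simp
    moreover have "(\<lambda>x::real. (1 / (1/(2*pi))) *\<^sub>R x + - ((1 / (1/(2*pi))) *\<^sub>R (1/2))) ` cbox 0 1 = {-pi..pi}"
      by (subst image_affinity_cbox) (simp add: cbox_interval)
    moreover have "(2*((1/(2*pi)) *\<^sub>R x + 1/2) - 1) * pi = x" for x :: real
      by (simp add: field_simps)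
    ultimately show ?thesis by simp
  qed
  have i3: "(g has_integral 0) {-pi..pi}"
    using has_integral_mult_right[OF i2, of "1 / (2 * complex_of_real pi)"] by simp
  have integrand: "vector_derivative (\<lambda>t. det (bloch D T t)) (at k) / det (bloch D T k) = g k" for k
  proof -
    have "((\<lambda>t. Fd (complex_of_real t)) has_vector_derivative deriv Fd (complex_of_real k)) (at k)"
      by (rule has_vector_derivative_real_field[OF holomorphic_derivI[OF Fd_holo openS realS]])
    hence "vector_derivative (\<lambda>t. Fd (complex_of_real t)) (at k) = deriv Fd (complex_of_real k)"
      by (rule vector_derivative_at)
    thus ?thesis by (simp add: detbloch g_def)
  qed
  have partC: "winding D T = 0"
    unfolding winding_def integrand using integral_unique[OF i3] by simp
  show ?thesis using partA partB partC by blast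
qed

end
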